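(* Let $f=1$ and $n>0$. Then for every $c\in\left[\frac{1}{e^n}\left(\frac12+\frac n2+\frac{n^2}{12}\right),\frac12\right]$, the equation $c=\xi_{n,1}(\gamma)$ has a solution $\gamma\in[0,1]$.
   Context: Let $g(x,y)=1$ if $x>y$, $g(x,y)=1/2$ if $x=y$, and $g(x,y)=0$ if $x<y$. For $n>0$, $f\in\mathbb{N}$ and $\gamma\in[0,1]$, define $$\xi_{n,f}(\gamma)=\sum_{D=0}^\infty\sum_{V=0}^\infty \frac{(n\gamma)^D}{e^{n\gamma}D!}\frac{(n(1-\gamma))^V}{e^{n(1-\gamma)}V!}\Big[\sum_{h=0}^D\binom{D}{h}\Big(\tfrac{V+1}{V+1+f}\Big)^h\Big(\tfrac{f}{V+1+f}\Big)^{D-h}g(V+1+h,f+D-h)-\sum_{h=0}^{D+1}\binom{D+1}{h}\Big(\tfrac{V}{V+f}\Big)^h\Big(\tfrac{f}{V+f}\Big)^{D+1-h}g(V+h,f+D+1-h)\Big],$$ with the convention $0^0=1$. Interpretation: $\xi_{n,f}(\gamma)$ is the expected utility gain from voting rather than delegating for a well-behaving agent. The setting has Poisson$(n)$ well-behaving agents, each delegating with probability $\gamma$, and $f$ misbehaving voters who always vote. Delegated votes are assigned uniformly at random to the active voters. The equation $c=\xi_{n,f}(\gamma)$ is the equilibrium indifference condition for voting cost $c$. *)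

theory Defs
  imports "HOL-Analysis.Analysis"
begin

definition gcmp :: "nat \<Rightarrow> nat \<Rightarrow> real" where
  "gcmp x y = (if x > y then 1 else if x = y then 1/2 else 0)"

definition poisson_w :: "real \<Rightarrow> nat \<Rightarrow> real" where
  "poisson_w lam k = lam ^ k / (exp lam * fact k)"

definition xi_bracket :: "nat \<Rightarrow> nat \<Rightarrow> nat \<Rightarrow> real" where
  "xi_bracket f D V =
     (\<Sum>h=0..D. real (D choose h) * (real (V+1) / real (V+1+f)) ^ h
          * (real f / real (V+1+f)) ^ (D-h) * gcmp (V+1+h) (f+D-h))
   - (\<Sum>h=0..D+1. real ((D+1) choose h) * (real V / real (V+f)) ^ h
          * (real f / real (V+f)) ^ (D+1-h) * gcmp (V+h) (f+D+1-h))"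

definition xi :: "real \<Rightarrow> nat \<Rightarrow> real \<Rightarrow> real" where
  "xi n f \<gamma> = (\<Sum>D. \<Sum>V. poisson_w (n*\<gamma>) D * poisson_w (n*(1-\<gamma>)) V * xi_bracket f D V)"

end

theory Submission
  imports Defs
begin


lemma ratio01: "a \<le> b \<Longrightarrow> 0 \<le> real a / real b \<and> real a / real b \<le> 1"
  by (cases "b = 0") (auto simp: divide_le_eq_1)

lemma gcmp01: "0 \<le> gcmp x y \<and> gcmp x y \<le> 1"
  by (simp add: gcmp_def)

lemma binsum_bound:
  assumes "0 \<le> p" "p \<le> 1" "0 \<le> q" "q \<le> 1" and that: "\<And>h. 0 \<le> g h \<and> g h \<le> 1"
  shows "\<bar>\<Sum>h=0..D. real (D choose h) * p ^ h * q ^ (D-h) * g h\<bar> \<le> 2 ^ D"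
proof -
  have "\<bar>\<Sum>h=0..D. real (D choose h) * p ^ h * q ^ (D-h) * g h\<bar>
      \<le> (\<Sum>h=0..D. \<bar>real (D choose h) * p ^ h * q ^ (D-h) * g h\<bar>)" by (rule sum_abs)
  also have "\<dots> \<le> (\<Sum>h=0..D. real (D choose h))"
  proof (rule sum_mono)
    fix h
    have a: "p ^ h \<le> 1" "q ^ (D-h) \<le> 1" using assms by (auto intro: power_le_one)
    have b: "0 \<le> p ^ h" "0 \<le> q ^ (D-h)" using assms by auto
    have "\<bar>real (D choose h) * p ^ h * q ^ (D-h) * g h\<bar> = real (D choose h) * (p ^ h * (q ^ (D-h) * g h))"
      using b that[of h] by (simp add: abs_mult)
    also have "\<dots> \<le> real (D choose h) * 1"
      apply (rule mult_left_mono)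
      using a b that[of h] by (auto intro!: mult_le_one) 
    finally show "\<bar>real (D choose h) * p ^ h * q ^ (D-h) * g h\<bar> \<le> real (D choose h)" by simp
  qed
  also have "\<dots> = 2 ^ D"
  proof -
    have "(\<Sum>h=0..D. real (D choose h)) = real (\<Sum>h\<le>D. D choose h)"
      by (simp add: atLeast0AtMost)
    also have "\<dots> = 2 ^ D" by (simp add: choose_row_sum)
    finally show ?thesis .
  qed
  finally show ?thesis .
qed

lemma bracket_bound: "\<bar>xi_bracket f D V\<bar> \<le> 3 * 2 ^ D"
proof -
  have 1: "\<bar>\<Sum>h=0..D. real (D choose h) * (real (V+1) / real (V+1+f)) ^ h
          * (real f / real (V+1+f)) ^ (D-h) * gcmp (V+1+h) (f+D-h)\<bar> \<le> 2 ^ D"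
    using ratio01[of "V+1" "V+1+f"] ratio01[of "f" "V+1+f"] gcmp01
    by (intro binsum_bound) auto
  have 2: "\<bar>\<Sum>h=0..D+1. real ((D+1) choose h) * (real V / real (V+f)) ^ h
          * (real f / real (V+f)) ^ (D+1-h) * gcmp (V+h) (f+D+1-h)\<bar> \<le> 2 ^ (D+1)"
    using ratio01[of "V" "V+f"] ratio01[of "f" "V+f"] gcmp01
    by (intro binsum_bound) auto
  have 3: "(2::real)^(D+1) = 2*2^D" by simp
  show ?thesis unfolding xi_bracket_def
    by (rule order_trans[OF abs_triangle_ineq4]) (use 1 2 3 in linarith)
qed

lemma poisson_bound:
  assumes "0 \<le> l" "l \<le> n"
  shows "0 \<le> poisson_w l k \<and> poisson_w l k \<le> n ^ k / fact k"
proof -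
  have "l ^ k \<le> n ^ k" using assms by (intro power_mono) auto
  moreover have "1 \<le> exp l" using assms by simp
  ultimately have "l ^ k / (exp l * fact k) \<le> n ^ k / (1 * fact k)"
    using assms by (intro frac_le mult_right_mono) auto
  then show ?thesis unfolding poisson_w_def using assms by auto
qed

lemma summable_expn: "summable (\<lambda>V. (n::real)^V / fact V)"
  using summable_exp[of n] by (simp add: field_simps)

lemma sums_expn: "(\<lambda>V. (n::real)^V / fact V) sums exp n"
proof -
  have "(\<lambda>V. n^V /\<^sub>R fact V) sums exp n" by (rule exp_converges)
  moreover have "(\<lambda>V. n^V /\<^sub>R fact V) = (\<lambda>V. (n::real)^V / fact V)"
    by (rule ext) (simp add: divide_inverse_commute)
  ultimately show ?thesis by simp
qed

lemma suminf_expn: "(\<Sum>V. (n::real)^V / fact V) = exp n"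
  using sums_expn by (rule sums_unique[symmetric])

lemma cont_xi:
  assumes n: "n > 0"
  shows "continuous_on {0..1} (xi n f)"
proof -
  define T where "T D V g = poisson_w (n*g) D * poisson_w (n*(1-g)) V * xi_bracket f D V" for D V g
  define G where "G D g = (\<Sum>V. T D V g)" for D g
  have xiG: "xi n f = (\<lambda>g. \<Sum>D. G D g)"
    by (intro ext) (simp only: xi_def G_def T_def)
  have Tb: "\<bar>T D V g\<bar> \<le> (n^D/fact D * 3*2^D) * (n^V/fact V)" if g: "g \<in> {0..1}" for D V g
  proof -
    have p1: "0 \<le> poisson_w (n*g) D \<and> poisson_w (n*g) D \<le> n ^ D / fact D"
      using g n by (intro poisson_bound) (auto intro: mult_nonneg_nonneg mult_left_le)
    have p2: "0 \<le> poisson_w (n*(1-g)) V \<and> poisson_w (n*(1-g)) V \<le> n ^ V / fact V"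
      using g n by (intro poisson_bound) (auto intro: mult_nonneg_nonneg mult_left_le)
    have "\<bar>T D V g\<bar> = poisson_w (n*g) D * poisson_w (n*(1-g)) V * \<bar>xi_bracket f D V\<bar>"
      using p1 p2 by (simp add: T_def abs_mult)
    also have "\<dots> \<le> (n ^ D / fact D) * (n ^ V / fact V) * (3*2^D)"
    proof (rule mult_mono)
      show "poisson_w (n*g) D * poisson_w (n*(1-g)) V \<le> (n ^ D / fact D) * (n ^ V / fact V)"
        by (rule mult_mono) (use p1 p2 n in auto)
      show "0 \<le> (n ^ D / fact D) * (n ^ V / fact V)" using n by simp
    qed (use bracket_bound[of f D V] in auto)
    finally show ?thesis by (simp add: algebra_simps)
  qed
  have Tc: "continuous_on {0..1} (T D V)" for D V
    unfolding T_def poisson_w_def by (intro continuous_intros) auto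
  have Gc: "continuous_on {0..1} (G D)" for D
  proof (rule uniform_limit_theorem[where F=sequentially and f="\<lambda>N g. \<Sum>V<N. T D V g"])
    show "\<forall>\<^sub>F N in sequentially. continuous_on {0..1} (\<lambda>g. \<Sum>V<N. T D V g)"
      by (intro always_eventually allI continuous_on_sum Tc)
    show "uniform_limit {0..1} (\<lambda>N g. \<Sum>V<N. T D V g) (G D) sequentially"
      unfolding G_def
      apply (rule Weierstrass_m_test[where M="\<lambda>V. (n^D/fact D * 3*2^D) * (n^V/fact V)"])
      apply (unfold real_norm_def, erule Tb)
      by (rule summable_mult[OF summable_expn])
  qed (rule trivial_limit_sequentially)
  have Gb: "\<bar>G D g\<bar> \<le> 3 * exp n * ((2*n)^D / fact D)" if g: "g \<in> {0..1}" for D g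
  proof -
    have "norm (G D g) \<le> (\<Sum>V. (n^D/fact D * 3*2^D) * (n^V/fact V))"
      unfolding G_def
      apply (rule norm_suminf_le)
      apply (unfold real_norm_def, rule Tb[OF g])
      by (rule summable_mult[OF summable_expn])
    also have "\<dots> = (n^D/fact D * 3*2^D) * exp n"
      by (subst suminf_mult[OF summable_expn]) (simp add: suminf_expn)
    also have "\<dots> = 3 * exp n * ((2*n)^D / fact D)"
      by (simp add: power_mult_distrib)
    finally show ?thesis by simp
  qed
  have sM: "summable (\<lambda>D. 3 * exp n * ((2*n)^D / fact D))"
    using summable_expn by (intro summable_mult)
  show ?thesis unfolding xiG
  proof (rule uniform_limit_theorem[where F=sequentially and f="\<lambda>N g. \<Sum>D<N. G D g"])
    show "\<forall>\<^sub>F N in sequentially. continuous_on {0..1} (\<lambda>g. \<Sum>D<N. G D g)"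
      by (intro always_eventually allI continuous_on_sum Gc)
    show "uniform_limit {0..1} (\<lambda>N g. \<Sum>D<N. G D g) (\<lambda>g. \<Sum>D. G D g) sequentially"
      apply (rule Weierstrass_m_test[where M="\<lambda>D. 3 * exp n * ((2*n)^D / fact D)"])
      apply (unfold real_norm_def, erule Gb)
      by (rule sM)
  qed (rule trivial_limit_sequentially)
qed



lemma gcmp_sym: "gcmp x y + gcmp y x = 1"
  by (simp add: gcmp_def)

lemma sym_sum: "(\<Sum>h=0..D. real (D choose h) * gcmp (1+h) (1+D-h)) = 2^D / 2"
proof -
  define S where "S = (\<Sum>h=0..D. real (D choose h) * gcmp (1+h) (1+D-h))"
  have "S = (\<Sum>h=0..D. real (D choose (D + 0 - h)) * gcmp (1+(D+0-h)) (1+D-(D+0-h)))"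
    unfolding S_def by (rule sum.atLeastAtMost_rev)
  also have "\<dots> = (\<Sum>h=0..D. real (D choose h) * gcmp (1+D-h) (1+h))"
    by (rule sum.cong) (auto simp: binomial_symmetric[symmetric] Suc_diff_le)
  finally have S2: "S = (\<Sum>h=0..D. real (D choose h) * gcmp (1+D-h) (1+h))" .
  have "S + S = (\<Sum>h=0..D. real (D choose h) * (gcmp (1+h) (1+D-h) + gcmp (1+D-h) (1+h)))"
    by (subst S2, subst S_def) (simp add: sum.distrib[symmetric] algebra_simps)
  also have "\<dots> = (\<Sum>h=0..D. real (D choose h))" by (simp add: gcmp_sym)
  also have "\<dots> = real (\<Sum>h\<le>D. D choose h)" by (simp add: atLeast0AtMost)
  also have "\<dots> = 2 ^ D" by (simp add: choose_row_sum)
  finally show ?thesis unfolding S_def by simp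
qed

lemma bracket_D0: "xi_bracket 1 D 0 = 1/2"
proof -
  have A: "(\<Sum>h=0..D. real (D choose h) * (real (0+1) / real (0+1+1)) ^ h
          * (real 1 / real (0+1+1)) ^ (D-h) * gcmp (0+1+h) (1+D-h))
        = (1/2)^D * (\<Sum>h=0..D. real (D choose h) * gcmp (1+h) (1+D-h))"
    unfolding sum_distrib_left
  proof (rule sum.cong)
    fix h assume "h \<in> {0..D}"
    then have "(1/2::real)^h * (1/2)^(D-h) = (1/2)^D" by (simp add: power_add[symmetric])
    then show "real (D choose h) * (real (0+1) / real (0+1+1)) ^ h
          * (real 1 / real (0+1+1)) ^ (D-h) * gcmp (0+1+h) (1+D-h) = (1/2)^D * (real (D choose h) * gcmp (1+h) (1+D-h))"
      by (simp add: algebra_simps)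
  qed simp
  have B: "(\<Sum>h=0..D+1. real ((D+1) choose h) * (real 0 / real (0+1)) ^ h
          * (real 1 / real (0+1)) ^ (D+1-h) * gcmp (0+h) (1+D+1-h)) = 0"
    by (rule sum.neutral) (auto simp: gcmp_def)
  show ?thesis unfolding xi_bracket_def A B sym_sum by (simp add: power_divide)
qed

lemma bracket_0V: "xi_bracket 1 0 V = (if V = 0 then 1/2 else if V = 1 then 1/2 else if V = 2 then 1/6 else 0)"
proof -
  have "xi_bracket 1 0 V = gcmp (V+1) 1 - (real 1 / real (V+1) * gcmp V 2 + real V / real (V+1) * gcmp (V+1) 1)"
    unfolding xi_bracket_def by (simp add: add_ac numeral_2_eq_2)
  moreover have "real 1 / real (V+1) + real V / real (V+1) = 1"
    by (simp add: field_simps)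
  moreover have "V \<ge> 3 \<Longrightarrow> gcmp V 2 = 1 \<and> gcmp (V+1) 1 = 1" by (simp add: gcmp_def)
  moreover have "V = 0 \<or> V = 1 \<or> V = 2 \<or> V \<ge> 3" by auto
  ultimately show ?thesis by (auto simp: gcmp_def)
qed


lemma bracket_D0': "xi_bracket (Suc 0) D 0 = 1/2"
  using bracket_D0 by simp

lemma bracket_0V': "xi_bracket (Suc 0) 0 V = (if V = 0 then 1/2 else if V = 1 then 1/2 else if V = 2 then 1/6 else 0)"
  using bracket_0V by simp

lemma pw0: "poisson_w 0 D = (if D = 0 then 1 else 0)"
  by (simp add: poisson_w_def)

lemma xi_at0: "xi n 1 0 = (1/2 + n/2 + n^2/12) / exp n"
proof -
  have inner0: "(\<Sum>V. poisson_w (n*0) D * poisson_w (n*(1-0)) V * xi_bracket 1 D V)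
      = (if D = 0 then (\<Sum>V. poisson_w n V * xi_bracket 1 0 V) else 0)" for D
    by (simp add: pw0)
  have "xi n 1 0 = (\<Sum>D. if D = 0 then (\<Sum>V. poisson_w n V * xi_bracket 1 0 V) else 0)"
    unfolding xi_def inner0 ..
  also have "\<dots> = (\<Sum>V. poisson_w n V * xi_bracket 1 0 V)"
    by (subst suminf_finite[of "{0}"]) auto
  also have "\<dots> = (\<Sum>V\<in>{0,1,2}. poisson_w n V * xi_bracket 1 0 V)"
  proof (rule suminf_finite)
    fix V :: nat assume "V \<notin> {0,1,2}"
    then show "poisson_w n V * xi_bracket 1 0 V = 0" by (simp only: bracket_0V) simp
  qed simp
  also have "\<dots> = (1/2 + n/2 + n^2/12) / exp n"
    by (simp add: bracket_0V' poisson_w_def field_simps power2_eq_square)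
  finally show ?thesis .
qed

lemma xi_at1: "xi n 1 1 = 1/2"
proof -
  have inner1: "(\<Sum>V. poisson_w (n*1) D * poisson_w (n*(1-1)) V * xi_bracket 1 D V)
      = (1 / (2 * exp n)) * (n^D / fact D)" for D
  proof -
    have "(\<Sum>V. poisson_w (n*1) D * poisson_w (n*(1-1)) V * xi_bracket 1 D V)
       = (\<Sum>V\<in>{0}. poisson_w (n*1) D * poisson_w (n*(1-1)) V * xi_bracket 1 D V)"
      by (rule suminf_finite) (auto simp: pw0)
    also have "\<dots> = (1 / (2 * exp n)) * (n^D / fact D)"
      by (simp add: pw0 poisson_w_def bracket_D0')
    finally show ?thesis .
  qed
  have "xi n 1 1 = (\<Sum>D. (1 / (2 * exp n)) * (n^D / fact D))"
    unfolding xi_def inner1 ..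
  also have "\<dots> = (1 / (2 * exp n)) * exp n"
    by (subst suminf_mult[OF summable_expn]) (simp add: suminf_expn)
  also have "\<dots> = 1/2" by simp
  finally show ?thesis .
qed

theorem proposition2:
  fixes n c :: real
  assumes "n > 0"
    and "(1/2 + n/2 + n^2/12) / exp n \<le> c" and "c \<le> 1/2"
  shows "\<exists>\<gamma>\<in>{0..1}. c = xi n 1 \<gamma>"
proof -
  have l: "xi n 1 0 \<le> c" using assms(2) by (simp only: xi_at0)
  have r: "c \<le> xi n 1 1" using assms(3) by (simp only: xi_at1)
  have "\<exists>x. 0 \<le> x \<and> x \<le> 1 \<and> xi n 1 x = c"
    by (rule IVT'[OF l r _ cont_xi[OF assms(1)]]) simp
  then show ?thesis by force
qed

end
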